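(* Let $(J,W)$ be a graphon with a graphon automorphism $\varphi$, and let $u(t)$ be a trajectory of the Kuramoto graphon system $\dot u_x=\int_J W(x,y)\sin(u_y-u_x)\,d\mu(y)$ on $L^1(J)$ with $\varphi^*(u(0))=u(0)$, where $\varphi^*v=v\circ\varphi$. Let $(W^{(n)})_n$ be graphons on $J$ and $u^{(n)}(t)$ trajectories of $\dot u_x=\int_J W^{(n)}(x,y)\sin(u_y-u_x)\,d\mu(y)$ such that \[ \lim_{n\to\infty}\|W^{(n)}-W\|_{\infty\to1}=0,\qquad\lim_{n\to\infty}\|u^{(n)}(0)-u(0)\|_1=0. \] Then for every $t\in\mathbb{R}$, $\lim_{n\to\infty}\|\varphi^*(u^{(n)}(t))-u^{(n)}(t)\|_1=0$, and the convergence is uniform in $t$ on every compact interval $[-T,T]$.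
   Context: A graphon $(J,W)$ is a probability space $J=(\Omega,\mathcal A,\mu)$ with a symmetric measurable $W:\Omega\times\Omega\to[0,1]$. A graphon automorphism is an invertible measure preserving $\varphi:J\to J$ such that for every $x$ and almost every $y$, $W(\varphi(x),\varphi(y))=W(x,y)$. $\|K\|_{\infty\to1}=\sup_{\|h\|_{L^\infty}\le1}\int_J\big|\int_J K(x,y)h(y)\,d\mu(y)\big|\,d\mu(x)$. *)

theory Defs
  imports "HOL-Probability.Probability"
begin

definition graphon :: "'a measure \<Rightarrow> ('a \<Rightarrow> 'a \<Rightarrow> real) \<Rightarrow> bool" where
  "graphon M W \<longleftrightarrow> prob_space M \<and>
     (\<lambda>(x,y). W x y) \<in> borel_measurable (M \<Otimes>\<^sub>M M) \<and>
     (\<forall>x\<in>space M. \<forall>y\<in>space M. W x y = W y x \<and> 0 \<le> W x y \<and> W x y \<le> 1)"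

definition meas_pres :: "'a measure \<Rightarrow> ('a \<Rightarrow> 'a) \<Rightarrow> bool" where
  "meas_pres M f \<longleftrightarrow> f \<in> M \<rightarrow>\<^sub>M M \<and> distr M M f = M"

definition graphon_automorphism :: "'a measure \<Rightarrow> ('a \<Rightarrow> 'a \<Rightarrow> real) \<Rightarrow> ('a \<Rightarrow> 'a) \<Rightarrow> bool" where
  "graphon_automorphism M W \<phi> \<longleftrightarrow>
     bij_betw \<phi> (space M) (space M) \<and> meas_pres M \<phi> \<and>
     meas_pres M (the_inv_into (space M) \<phi>) \<and>
     (\<forall>x\<in>space M. AE y in M. W (\<phi> x) (\<phi> y) = W x y)"

definition inf_to_one_norm :: "'a measure \<Rightarrow> ('a \<Rightarrow> 'a \<Rightarrow> real) \<Rightarrow> real" where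
  "inf_to_one_norm M K =
     (SUP h \<in> {h. h \<in> borel_measurable M \<and> (\<forall>x\<in>space M. \<bar>h x\<bar> \<le> 1)}.
        LINT x|M. \<bar>LINT y|M. K x y * h y\<bar>)"

definition L1_norm :: "'a measure \<Rightarrow> ('a \<Rightarrow> real) \<Rightarrow> real" where
  "L1_norm M f = (LINT x|M. \<bar>f x\<bar>)"

definition kuramoto_rhs :: "'a measure \<Rightarrow> ('a \<Rightarrow> 'a \<Rightarrow> real) \<Rightarrow> ('a \<Rightarrow> real) \<Rightarrow> 'a \<Rightarrow> real" where
  "kuramoto_rhs M W v x = (LINT y|M. W x y * sin (v y - v x))"

definition kuramoto_trajectory :: "'a measure \<Rightarrow> ('a \<Rightarrow> 'a \<Rightarrow> real) \<Rightarrow> (real \<Rightarrow> 'a \<Rightarrow> real) \<Rightarrow> bool" where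
  "kuramoto_trajectory M W u \<longleftrightarrow>
     (\<forall>t. integrable M (u t)) \<and>
     (\<forall>t. ((\<lambda>h. L1_norm M (\<lambda>x. (u (t + h) x - u t x) / h - kuramoto_rhs M W (u t) x))
            \<longlongrightarrow> 0) (at 0))"

end

theory Submission
  imports Defs
begin

lemma gronwall_fwd:
  fixes f :: "real \<Rightarrow> real"
  assumes cont: "continuous_on UNIV f" and f0: "f 0 \<ge> 0" and L: "L \<ge> 0" and c: "c \<ge> 0"
    and step: "\<And>t e. t \<ge> 0 \<Longrightarrow> e > 0 \<Longrightarrow>
       \<exists>d>0. \<forall>h. 0 < h \<and> h < d \<longrightarrow> f (t+h) \<le> f t + h*(L * f t + c + e)"
    and s: "s \<ge> 0"
  shows "f s \<le> (f 0 + c* s) * exp (L* s)"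
proof -
  have key: "f s \<le> (f 0 + c* s) * exp (L* s) + \<delta> * ((1+s) * exp (L* s))" if dpos: "\<delta> > 0" for \<delta>
  proof (rule ccontr)
    define F where "F t = (f 0 + \<delta> + (c+\<delta>)*t) * exp (L*t)" for t
    assume "\<not> ?thesis"
    hence fs: "f s - F s > 0" unfolding F_def by (simp add: algebra_simps)
    have Fstep: "F (t+h) \<ge> F t + h*L*F t + h*(c+\<delta>)" if "t \<ge> 0" "h \<ge> 0" for t h
    proof -
      define G where "G = f 0 + \<delta> + (c+\<delta>)*t"
      define E where "E = exp (L*t)"
      have G: "G \<ge> 0" unfolding G_def using f0 c dpos that by simp
      have E: "E \<ge> 1" unfolding E_def using L that by simp
      have e1: "exp (L*h) \<ge> 1 + L*h" by (rule exp_ge_add_one_self)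
      have lh: "L*h \<ge> 0" using L that by simp
      have "F (t+h) = (G + (c+\<delta>)*h) * E * exp (L*h)"
        unfolding F_def G_def E_def by (simp add: algebra_simps exp_add)
      also have "\<dots> \<ge> (G + (c+\<delta>)*h) * E * (1 + L*h)"
        using e1 G E c dpos that by (intro mult_left_mono) auto
      finally have 1: "F (t+h) \<ge> (G + (c+\<delta>)*h) * E * (1 + L*h)" .
      have "(G + (c+\<delta>)*h) * E * (1 + L*h) = G*E + h*L*(G*E) + (c+\<delta>)*h*E*(1+L*h)"
        by (simp add: algebra_simps)
      moreover have "(c+\<delta>)*h*E*(1+L*h) \<ge> (c+\<delta>)*h"
      proof -
        have "E*(1+L*h) \<ge> 1" using E lh by (metis le_add_same_cancel1 mult_mono' mult_1 order_trans zero_le_one)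
        moreover have "(c+\<delta>)*h \<ge> 0" using c dpos that by simp
        ultimately show ?thesis by (metis mult.assoc mult_left_mono mult_1_right)
      qed
      moreover have "F t = G*E" unfolding F_def G_def E_def by simp
      ultimately show ?thesis using 1 by (simp add: algebra_simps)
    qed
    define S where "S = {t \<in> {0..s}. f t - F t \<le> 0}"
    have S0: "0 \<in> S" unfolding S_def F_def using s dpos by simp
    have contF: "continuous_on UNIV F" unfolding F_def by (intro continuous_intros)
    have "closed S"
    proof -
      have "S = {0..s} \<inter> {t. f t - F t \<le> 0}" unfolding S_def by auto
      moreover have "closed {t. f t - F t \<le> 0}"
        by (intro closed_Collect_le continuous_on_diff cont contF continuous_on_const)
      ultimately show ?thesis by (simp add: closed_Int)
    qed
    moreover have bdd: "bdd_above S" unfolding S_def by (rule bdd_aboveI[of _ s]) auto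
    ultimately have supS: "Sup S \<in> S" using S0 closed_contains_Sup by blast
    define t0 where "t0 = Sup S"
    have t0: "0 \<le> t0" "t0 \<le> s" "f t0 - F t0 \<le> 0" using supS unfolding t0_def S_def by auto
    have t0s: "t0 < s" using t0 fs by (cases "t0 = s") auto
    obtain d where d: "d > 0" and hd: "\<forall>h. 0 < h \<and> h < d \<longrightarrow> f (t0+h) \<le> f t0 + h*(L * f t0 + c + \<delta>/2)"
      using step[OF t0(1), of "\<delta>/2"] dpos by auto
    define h where "h = min d (s - t0) / 2"
    have h: "0 < h" "h < d" "h < s - t0" unfolding h_def using d t0s by auto
    have A: "f (t0+h) \<le> f t0 + h*(L * f t0 + c + \<delta>/2)" using hd h by auto
    have B: "F (t0+h) \<ge> F t0 + h*L*F t0 + h*(c+\<delta>)" using Fstep t0(1) h(1) by simp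
    have "f (t0+h) - F (t0+h) \<le> (f t0 - F t0) * (1 + h*L) - h*\<delta>/2"
      using A B by (simp add: algebra_simps)
    also have "(f t0 - F t0) * (1 + h*L) \<le> 0"
      using t0(3) h L by (intro mult_nonpos_nonneg) auto
    finally have "f (t0+h) - F (t0+h) \<le> - (h*\<delta>/2)" by simp
    moreover have "h*\<delta>/2 > 0" using h dpos by simp
    ultimately have "f (t0+h) - F (t0+h) \<le> 0" by linarith
    hence "t0 + h \<in> S" unfolding S_def using h t0 by auto
    hence "t0 + h \<le> t0" unfolding t0_def using bdd by (rule cSup_upper)
    thus False using h by simp
  qed
  define B where "B = (1+s) * exp (L* s)"
  have Bpos: "B > 0" unfolding B_def using s by simp
  show ?thesis
  proof (rule field_le_epsilon)
    fix e :: real assume "e > 0"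
    have "f s \<le> (f 0 + c* s) * exp (L* s) + (e/B) * B" using key[of "e/B"] \<open>e>0\<close> Bpos
      unfolding B_def by simp
    thus "f s \<le> (f 0 + c* s) * exp (L* s) + e" using Bpos by simp
  qed
qed

lemma gronwall:
  fixes f :: "real \<Rightarrow> real"
  assumes cont: "continuous_on UNIV f" and f0: "f 0 \<ge> 0" and L: "L \<ge> 0" and c: "c \<ge> 0"
    and step: "\<And>t e. e > 0 \<Longrightarrow>
       \<exists>d>0. \<forall>h. h \<noteq> 0 \<and> \<bar>h\<bar> < d \<longrightarrow> f (t+h) \<le> f t + \<bar>h\<bar>*(L * f t + c + e)"
  shows "f s \<le> (f 0 + c*\<bar>s\<bar>) * exp (L*\<bar>s\<bar>)"
proof (cases "s \<ge> 0")
  case True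
  have "f s \<le> (f 0 + c* s) * exp (L* s)"
  proof (rule gronwall_fwd[OF cont f0 L c _ True])
    fix t e :: real assume "t \<ge> 0" "e > 0"
    then obtain d where "d > 0" "\<forall>h. h \<noteq> 0 \<and> \<bar>h\<bar> < d \<longrightarrow> f (t+h) \<le> f t + \<bar>h\<bar>*(L * f t + c + e)"
      using step by blast
    thus "\<exists>d>0. \<forall>h. 0 < h \<and> h < d \<longrightarrow> f (t+h) \<le> f t + h*(L * f t + c + e)"
      by (intro exI[of _ d]) (metis abs_of_pos less_irrefl)
  qed
  thus ?thesis using True by simp
next
  case False
  define g where "g t = f (-t)" for t
  have "g (-s) \<le> (g 0 + c* (-s)) * exp (L* (-s))"
  proof (rule gronwall_fwd[OF _ _ L c])
    show "continuous_on UNIV g" unfolding g_def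
      by (rule continuous_on_compose2[OF cont]) (auto intro: continuous_intros)
    show "g 0 \<ge> 0" using f0 unfolding g_def by simp
    show "- s \<ge> 0" using False by simp
    fix t e :: real assume "t \<ge> 0" "e > 0"
    then obtain d where "d > 0" and d: "\<forall>h. h \<noteq> 0 \<and> \<bar>h\<bar> < d \<longrightarrow> f (-t+h) \<le> f (-t) + \<bar>h\<bar>*(L * f (-t) + c + e)"
      using step by blast
    thus "\<exists>d>0. \<forall>h. 0 < h \<and> h < d \<longrightarrow> g (t+h) \<le> g t + h*(L * g t + c + e)"
    proof (intro exI[of _ d] conjI allI impI)
      fix h :: real assume h: "0 < h \<and> h < d"
      have "-h \<noteq> 0 \<and> \<bar>-h\<bar> < d" using h by simp
      hence "f (-t + (-h)) \<le> f (-t) + \<bar>-h\<bar>*(L * f (-t) + c + e)" using d by blast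
      thus "g (t+h) \<le> g t + h*(L * g t + c + e)" unfolding g_def using h by simp
    qed simp
  qed
  thus ?thesis using False unfolding g_def by simp
qed

lemma L1_nonneg: "L1_norm M f \<ge> 0"
  unfolding L1_norm_def by simp

lemma L1_mono_sum:
  assumes "integrable M b" "integrable M c"
    and "\<And>x. x \<in> space M \<Longrightarrow> \<bar>a x\<bar> \<le> \<bar>b x\<bar> + \<bar>c x\<bar>"
  shows "L1_norm M a \<le> L1_norm M b + L1_norm M c"
proof -
  have "L1_norm M a \<le> (LINT x|M. \<bar>b x\<bar> + \<bar>c x\<bar>)"
    unfolding L1_norm_def using assms by (intro integral_mono') auto
  also have "\<dots> = L1_norm M b + L1_norm M c"
    unfolding L1_norm_def by (intro Bochner_Integration.integral_add integrable_abs assms)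
  finally show ?thesis .
qed

lemma L1_mono:
  assumes "integrable M g" "\<And>x. x \<in> space M \<Longrightarrow> \<bar>a x\<bar> \<le> g x"
  shows "L1_norm M a \<le> integral\<^sup>L M g"
  unfolding L1_norm_def using assms by (intro integral_mono') force+

lemma L1_eq:
  assumes "\<And>x. x \<in> space M \<Longrightarrow> a x = b x"
  shows "L1_norm M a = L1_norm M b"
  unfolding L1_norm_def by (rule Bochner_Integration.integral_cong) (auto simp: assms)

lemma L1_comp:
  assumes "meas_pres M \<phi>" "g \<in> borel_measurable M"
  shows "L1_norm M (\<lambda>x. g (\<phi> x)) = L1_norm M g"
proof -
  have m: "\<phi> \<in> M \<rightarrow>\<^sub>M M" and d: "distr M M \<phi> = M" using assms(1) unfolding meas_pres_def by auto
  have "integral\<^sup>L (distr M M \<phi>) (\<lambda>x. \<bar>g x\<bar>) = (LINT x|M. \<bar>g (\<phi> x)\<bar>)"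
    using assms(2) by (intro integral_distr[OF m]) auto
  thus ?thesis unfolding L1_norm_def d by simp
qed

lemma integrable_comp:
  fixes g :: "'a \<Rightarrow> real"
  assumes "meas_pres M \<phi>" "integrable M g"
  shows "integrable M (\<lambda>x. g (\<phi> x))"
proof -
  have m: "\<phi> \<in> M \<rightarrow>\<^sub>M M" and d: "distr M M \<phi> = M" using assms(1) unfolding meas_pres_def by auto
  show ?thesis using integrable_distr_eq[of \<phi> M M g] m borel_measurable_integrable[OF assms(2)] assms(2) d by simp
qed

lemma integrable_q:
  fixes f :: "'a \<Rightarrow> real"
  shows "integrable M f \<Longrightarrow> integrable M g \<Longrightarrow> integrable M k \<Longrightarrow> integrable M (\<lambda>x. (f x - g x) / h - k x)"
  by (intro Bochner_Integration.integrable_diff integrable_divide)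

definition L1_deriv :: "'a measure \<Rightarrow> (real \<Rightarrow> 'a \<Rightarrow> real) \<Rightarrow> (real \<Rightarrow> 'a \<Rightarrow> real) \<Rightarrow> bool" where
  "L1_deriv M p D \<longleftrightarrow> (\<forall>t. ((\<lambda>h. L1_norm M (\<lambda>x. (p (t + h) x - p t x) / h - D t x)) \<longlongrightarrow> 0) (at 0))"

lemma L1_deriv_diff:
  assumes ia: "\<And>t. integrable M (a t)" and ib: "\<And>t. integrable M (b t)"
    and ida: "\<And>t. integrable M (da t)" and idb: "\<And>t. integrable M (db t)"
    and a: "L1_deriv M a da" and b: "L1_deriv M b db"
  shows "L1_deriv M (\<lambda>t x. a t x - b t x) (\<lambda>t x. da t x - db t x)"
  unfolding L1_deriv_def
proof
  fix t
  let ?qa = "\<lambda>h x. (a (t + h) x - a t x) / h - da t x"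
  let ?qb = "\<lambda>h x. (b (t + h) x - b t x) / h - db t x"
  have lim: "((\<lambda>h. L1_norm M (?qa h) + L1_norm M (?qb h)) \<longlongrightarrow> 0 + 0) (at 0)"
    using a b unfolding L1_deriv_def by (intro tendsto_add) auto
  have le: "L1_norm M (\<lambda>x. ((a (t + h) x - b (t + h) x) - (a t x - b t x)) / h - (da t x - db t x))
       \<le> L1_norm M (?qa h) + L1_norm M (?qb h)" for h
  proof (rule L1_mono_sum)
    show "integrable M (?qa h)" by (rule integrable_q[OF ia ia ida])
    show "integrable M (?qb h)" by (rule integrable_q[OF ib ib idb])
    fix x
    have "((a (t + h) x - b (t + h) x) - (a t x - b t x)) / h - (da t x - db t x) = ?qa h x - ?qb h x"
      by (simp add: diff_divide_distrib)
    thus "\<bar>((a (t + h) x - b (t + h) x) - (a t x - b t x)) / h - (da t x - db t x)\<bar> \<le> \<bar>?qa h x\<bar> + \<bar>?qb h x\<bar>"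
      by (simp only: abs_triangle_ineq4)
  qed
  have le': "norm (L1_norm M (\<lambda>x. ((a (t + h) x - b (t + h) x) - (a t x - b t x)) / h - (da t x - db t x)))
       \<le> L1_norm M (?qa h) + L1_norm M (?qb h)" for h
    using le[of h] L1_nonneg[of M] by simp
  show "((\<lambda>h. L1_norm M (\<lambda>x. ((a (t + h) x - b (t + h) x) - (a t x - b t x)) / h - (da t x - db t x))) \<longlongrightarrow> 0) (at 0)"
    using Lim_null_comparison[OF always_eventually[OF allI[OF le']]] lim by simp
qed

lemma L1_deriv_comp:
  assumes mp: "meas_pres M \<phi>" and ia: "\<And>t. integrable M (a t)" and ida: "\<And>t. integrable M (da t)"
    and a: "L1_deriv M a da"
  shows "L1_deriv M (\<lambda>t x. a t (\<phi> x)) (\<lambda>t x. da t (\<phi> x))"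
  unfolding L1_deriv_def
proof
  fix t
  have "L1_norm M (\<lambda>x. (a (t + h) (\<phi> x) - a t (\<phi> x)) / h - da t (\<phi> x))
     = L1_norm M (\<lambda>x. (a (t + h) x - a t x) / h - da t x)" for h
    by (rule L1_comp[OF mp borel_measurable_integrable[OF integrable_q[OF ia ia ida]]])
  thus "((\<lambda>h. L1_norm M (\<lambda>x. (a (t + h) (\<phi> x) - a t (\<phi> x)) / h - da t (\<phi> x))) \<longlongrightarrow> 0) (at 0)"
    using a unfolding L1_deriv_def by simp
qed

lemma L1_deriv_dini:
  assumes ip: "\<And>t. integrable M (p t)" and iD: "\<And>t. integrable M (D t)"
    and d: "L1_deriv M p D"
  shows "continuous_on UNIV (\<lambda>t. L1_norm M (p t))"
    and "\<And>t e. e > 0 \<Longrightarrow> \<exists>d>0. \<forall>h. h \<noteq> 0 \<and> \<bar>h\<bar> < d \<longrightarrow>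
            L1_norm M (p (t+h)) \<le> L1_norm M (p t) + \<bar>h\<bar> * (L1_norm M (D t) + e)"
proof -
  let ?q = "\<lambda>t h x. (p (t + h) x - p t x) / h - D t x"
  have core: "\<bar>L1_norm M (p (t+h)) - L1_norm M (p t)\<bar> \<le> \<bar>h\<bar> * (L1_norm M (D t) + L1_norm M (?q t h))"
    if "h \<noteq> 0" for t h
  proof -
    have idiff: "integrable M (\<lambda>x. p (t+h) x - p t x)" using ip by auto
    have "L1_norm M (\<lambda>x. p (t+h) x - p t x) = L1_norm M (\<lambda>x. h * ((p (t+h) x - p t x) / h))"
      using that by (intro L1_eq) auto
    also have "\<dots> = \<bar>h\<bar> * L1_norm M (\<lambda>x. (p (t+h) x - p t x) / h)"
      unfolding L1_norm_def by (simp add: abs_mult)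
    also have "L1_norm M (\<lambda>x. (p (t+h) x - p t x) / h) \<le> L1_norm M (D t) + L1_norm M (?q t h)"
      by (rule L1_mono_sum[OF iD integrable_q[OF ip ip iD]]) auto
    finally have A: "L1_norm M (\<lambda>x. p (t+h) x - p t x) \<le> \<bar>h\<bar> * (L1_norm M (D t) + L1_norm M (?q t h))"
      by (simp add: mult_left_mono)
    have "L1_norm M (p (t+h)) \<le> L1_norm M (p t) + L1_norm M (\<lambda>x. p (t+h) x - p t x)"
      by (rule L1_mono_sum) (use ip idiff in auto)
    moreover have "L1_norm M (p t) \<le> L1_norm M (p (t+h)) + L1_norm M (\<lambda>x. p (t+h) x - p t x)"
      by (rule L1_mono_sum) (use ip idiff in auto)
    ultimately show ?thesis using A by linarith
  qed
  show "continuous_on UNIV (\<lambda>t. L1_norm M (p t))"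
  proof (intro continuous_at_imp_continuous_on ballI)
    fix t :: real
    have l0: "((\<lambda>h. \<bar>h\<bar>) \<longlongrightarrow> \<bar>0::real\<bar>) (at 0)"
      by (intro tendsto_rabs tendsto_ident_at)
    have l1: "((\<lambda>h. L1_norm M (?q t h)) \<longlongrightarrow> 0) (at 0)" using d unfolding L1_deriv_def by blast
    have lim: "((\<lambda>h. \<bar>h\<bar> * (L1_norm M (D t) + L1_norm M (?q t h))) \<longlongrightarrow> \<bar>0::real\<bar> * (L1_norm M (D t) + 0)) (at 0)"
      by (intro tendsto_mult tendsto_add tendsto_const l0 l1)
    have "((\<lambda>h. L1_norm M (p (t+h)) - L1_norm M (p t)) \<longlongrightarrow> 0) (at 0)"
    proof (rule Lim_null_comparison[OF _ ])
      show "\<forall>\<^sub>F h in at 0. norm (L1_norm M (p (t+h)) - L1_norm M (p t)) \<le> \<bar>h\<bar> * (L1_norm M (D t) + L1_norm M (?q t h))"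
        unfolding eventually_at using core by (intro exI[of _ 1]) simp
      show "((\<lambda>h. \<bar>h\<bar> * (L1_norm M (D t) + L1_norm M (?q t h))) \<longlongrightarrow> 0) (at 0)" using lim by simp
    qed
    hence "((\<lambda>h. L1_norm M (p (t+h))) \<longlongrightarrow> L1_norm M (p t)) (at 0)"
      by (simp add: LIM_zero_iff)
    thus "isCont (\<lambda>t. L1_norm M (p t)) t" unfolding isCont_iff by simp
  qed
  fix t e :: real assume "e > 0"
  have "\<forall>\<^sub>F h in at 0. L1_norm M (?q t h) < e"
    using d \<open>e>0\<close> unfolding L1_deriv_def by (auto dest: order_tendstoD(2))
  then obtain d where "d > 0" and dd: "\<forall>h. h \<noteq> 0 \<and> dist h 0 < d \<longrightarrow> L1_norm M (?q t h) < e"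
    unfolding eventually_at by auto
  show "\<exists>d>0. \<forall>h. h \<noteq> 0 \<and> \<bar>h\<bar> < d \<longrightarrow>
            L1_norm M (p (t+h)) \<le> L1_norm M (p t) + \<bar>h\<bar> * (L1_norm M (D t) + e)"
  proof (intro exI[of _ d] conjI allI impI)
    fix h :: real assume h: "h \<noteq> 0 \<and> \<bar>h\<bar> < d"
    hence "L1_norm M (?q t h) < e" using dd by simp
    hence "\<bar>h\<bar> * (L1_norm M (D t) + L1_norm M (?q t h)) \<le> \<bar>h\<bar> * (L1_norm M (D t) + e)"
      by (intro mult_left_mono) auto
    thus "L1_norm M (p (t+h)) \<le> L1_norm M (p t) + \<bar>h\<bar> * (L1_norm M (D t) + e)"
      using core[of h t] h by linarith
  qed fact
qed

definition kern :: "'a measure \<Rightarrow> ('a \<Rightarrow> 'a \<Rightarrow> real) \<Rightarrow> bool" where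
  "kern M K \<longleftrightarrow> prob_space M \<and> (\<lambda>(x,y). K x y) \<in> borel_measurable (M \<Otimes>\<^sub>M M) \<and>
     (\<forall>x\<in>space M. \<forall>y\<in>space M. \<bar>K x y\<bar> \<le> 1)"

lemma kern_graphon: "graphon M W \<Longrightarrow> kern M W"
  unfolding graphon_def kern_def by auto

lemma kern_diff:
  assumes "graphon M W1" "graphon M W2"
  shows "kern M (\<lambda>x y. W1 x y - W2 x y)"
proof -
  have m1: "(\<lambda>(x,y). W1 x y) \<in> borel_measurable (M \<Otimes>\<^sub>M M)" and m2: "(\<lambda>(x,y). W2 x y) \<in> borel_measurable (M \<Otimes>\<^sub>M M)"
    using assms unfolding graphon_def by auto
  have "(\<lambda>p. (\<lambda>(x,y). W1 x y) p - (\<lambda>(x,y). W2 x y) p) \<in> borel_measurable (M \<Otimes>\<^sub>M M)"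
    using m1 m2 by (rule borel_measurable_diff)
  hence "(\<lambda>(x,y). W1 x y - W2 x y) \<in> borel_measurable (M \<Otimes>\<^sub>M M)"
    by (simp add: case_prod_beta')
  moreover have "\<forall>x\<in>space M. \<forall>y\<in>space M. \<bar>W1 x y - W2 x y\<bar> \<le> 1"
  proof (intro ballI)
    fix x y assume "x \<in> space M" "y \<in> space M"
    hence "0 \<le> W1 x y" "W1 x y \<le> 1" "0 \<le> W2 x y" "W2 x y \<le> 1" using assms unfolding graphon_def by auto
    thus "\<bar>W1 x y - W2 x y\<bar> \<le> 1" by linarith
  qed
  ultimately show ?thesis using assms unfolding graphon_def kern_def by auto
qed

lemma kern_prob: "kern M K \<Longrightarrow> prob_space M" unfolding kern_def by auto

lemma kern_meas: "kern M K \<Longrightarrow> (\<lambda>(x,y). K x y) \<in> borel_measurable (M \<Otimes>\<^sub>M M)"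
  unfolding kern_def by auto

lemma kern_bound: "kern M K \<Longrightarrow> x \<in> space M \<Longrightarrow> y \<in> space M \<Longrightarrow> \<bar>K x y\<bar> \<le> 1"
  unfolding kern_def by auto

lemma kern_sec:
  assumes "kern M K" "x \<in> space M"
  shows "(\<lambda>y. K x y) \<in> borel_measurable M"
proof -
  have "(\<lambda>y. (\<lambda>(x,y). K x y) (Pair x y)) \<in> borel_measurable M"
    by (rule measurable_compose[OF measurable_Pair1'[OF assms(2)] kern_meas[OF assms(1)]])
  thus ?thesis by simp
qed

lemma kern_int_sec:
  assumes K: "kern M K" and x: "x \<in> space M" and g: "g \<in> borel_measurable M"
    and gb: "\<And>y. y \<in> space M \<Longrightarrow> \<bar>g y\<bar> \<le> 1"
  shows "integrable M (\<lambda>y. K x y * g y)" and "\<bar>LINT y|M. K x y * g y\<bar> \<le> 1"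
proof -
  interpret prob_space M using kern_prob[OF K] .
  have b: "\<bar>K x y * g y\<bar> \<le> 1" if "y \<in> space M" for y
    using kern_bound[OF K x that] gb[OF that] by (simp add: abs_mult mult_le_one)
  show i: "integrable M (\<lambda>y. K x y * g y)"
    by (rule integrable_const_bound[where B=1]) (use b kern_sec[OF K x] g in auto)
  have "\<bar>LINT y|M. K x y * g y\<bar> \<le> (LINT y|M. \<bar>K x y * g y\<bar>)"
    using integral_norm_bound[of M "\<lambda>y. K x y * g y"] by simp
  also have "\<dots> \<le> (LINT y|M. 1)"
    by (rule integral_mono') (use b in auto)
  also have "\<dots> = 1" by (simp add: prob_space)
  finally show "\<bar>LINT y|M. K x y * g y\<bar> \<le> 1" .
qed

lemma kern_int_meas:
  assumes K: "kern M K" and G: "(\<lambda>(x,y). G x y) \<in> borel_measurable (M \<Otimes>\<^sub>M M)"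
  shows "(\<lambda>x. LINT y|M. K x y * G x y) \<in> borel_measurable M"
proof -
  interpret prob_space M using kern_prob[OF K] .
  have "(\<lambda>p. (\<lambda>(x,y). K x y) p * (\<lambda>(x,y). G x y) p) \<in> borel_measurable (M \<Otimes>\<^sub>M M)"
    using kern_meas[OF K] G by (rule borel_measurable_times)
  hence "(\<lambda>(x,y). K x y * G x y) \<in> borel_measurable (M \<Otimes>\<^sub>M M)"
    by (simp add: case_prod_beta')
  thus ?thesis by (rule borel_measurable_lebesgue_integral)
qed

lemma sin_diff_meas:
  fixes v :: "'a \<Rightarrow> real"
  assumes "v \<in> borel_measurable M"
  shows "(\<lambda>(x,y). sin (v y - v x)) \<in> borel_measurable (M \<Otimes>\<^sub>M M)"
proof -
  have d: "(\<lambda>p. v (snd p) - v (fst p)) \<in> borel_measurable (M \<Otimes>\<^sub>M M)"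
  proof (rule borel_measurable_diff)
    show "(\<lambda>p. v (snd p)) \<in> borel_measurable (M \<Otimes>\<^sub>M M)"
      by (rule measurable_compose[OF measurable_snd assms])
    show "(\<lambda>p. v (fst p)) \<in> borel_measurable (M \<Otimes>\<^sub>M M)"
      by (rule measurable_compose[OF measurable_fst assms])
  qed
  have s: "(\<lambda>x::real. sin x) \<in> borel_measurable borel"
    by (rule borel_measurable_continuous_onI) (intro continuous_intros)
  have "(\<lambda>p. sin (v (snd p) - v (fst p))) \<in> borel_measurable (M \<Otimes>\<^sub>M M)"
    by (rule measurable_compose[OF d s])
  thus ?thesis by (simp add: case_prod_beta')
qed

lemma rhs_meas:
  assumes "kern M W" "v \<in> borel_measurable M"
  shows "kuramoto_rhs M W v \<in> borel_measurable M"
  unfolding kuramoto_rhs_def[abs_def]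
  by (rule kern_int_meas[OF assms(1) sin_diff_meas[OF assms(2)]])

lemma rhs_sec:
  assumes K: "kern M W" and v: "v \<in> borel_measurable M" and x: "x \<in> space M"
  shows "integrable M (\<lambda>y. W x y * sin (v y - v x))" and "\<bar>kuramoto_rhs M W v x\<bar> \<le> 1"
proof -
  have g: "(\<lambda>y. sin (v y - v x)) \<in> borel_measurable M" using v by measurable
  show "integrable M (\<lambda>y. W x y * sin (v y - v x))" by (rule kern_int_sec(1)[OF K x g]) simp
  show "\<bar>kuramoto_rhs M W v x\<bar> \<le> 1" unfolding kuramoto_rhs_def by (rule kern_int_sec(2)[OF K x g]) simp
qed

lemma rhs_integrable:
  assumes K: "kern M W" and v: "v \<in> borel_measurable M"
  shows "integrable M (kuramoto_rhs M W v)"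
proof -
  interpret prob_space M using kern_prob[OF K] .
  show ?thesis
    by (rule integrable_const_bound[where B=1]) (use rhs_sec(2)[OF K v] rhs_meas[OF K v] in auto)
qed

lemma abs_sin_diff_le: "\<bar>sin a - sin b\<bar> \<le> \<bar>a - b\<bar>" for a b :: real
proof -
  have "\<bar>sin a - sin b\<bar> = 2 * \<bar>sin ((a-b)/2)\<bar> * \<bar>cos ((a+b)/2)\<bar>"
    by (simp add: sin_diff_sin abs_mult)
  also have "\<dots> \<le> 2 * \<bar>sin ((a-b)/2)\<bar> * 1"
    by (intro mult_left_mono) auto
  also have "\<dots> \<le> 2 * \<bar>(a-b)/2\<bar>"
    using abs_sin_x_le_abs_x[of "(a-b)/2"] by simp
  finally show ?thesis by simp
qed

lemma rhs_lip:
  assumes K: "kern M W" and v: "integrable M v" and v': "integrable M v'"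
  shows "L1_norm M (\<lambda>x. kuramoto_rhs M W v x - kuramoto_rhs M W v' x) \<le> 2 * L1_norm M (\<lambda>x. v x - v' x)"
proof -
  interpret prob_space M using kern_prob[OF K] .
  have vm: "v \<in> borel_measurable M" and v'm: "v' \<in> borel_measurable M" using v v' by auto
  define N where "N = L1_norm M (\<lambda>x. v x - v' x)"
  have idf: "integrable M (\<lambda>y. \<bar>v y - v' y\<bar>)"
    by (rule integrable_abs[OF Bochner_Integration.integrable_diff[OF v v']])
  have pt: "\<bar>kuramoto_rhs M W v x - kuramoto_rhs M W v' x\<bar> \<le> N + \<bar>v x - v' x\<bar>" if x: "x \<in> space M" for x
  proof -
    have "kuramoto_rhs M W v x - kuramoto_rhs M W v' x =
        (LINT y|M. W x y * sin (v y - v x) - W x y * sin (v' y - v' x))"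
      unfolding kuramoto_rhs_def
      by (rule Bochner_Integration.integral_diff[symmetric, OF rhs_sec(1)[OF K vm x] rhs_sec(1)[OF K v'm x]])
    also have "\<bar>\<dots>\<bar> \<le> (LINT y|M. \<bar>W x y * sin (v y - v x) - W x y * sin (v' y - v' x)\<bar>)"
      using integral_norm_bound[of M "\<lambda>y. W x y * sin (v y - v x) - W x y * sin (v' y - v' x)"] by simp
    also have "\<dots> \<le> (LINT y|M. \<bar>v y - v' y\<bar> + \<bar>v x - v' x\<bar>)"
    proof (rule integral_mono')
      show "integrable M (\<lambda>y. \<bar>v y - v' y\<bar> + \<bar>v x - v' x\<bar>)"
        by (rule Bochner_Integration.integrable_add[OF idf integrable_const])
      fix y assume y: "y \<in> space M"
      show "0 \<le> \<bar>v y - v' y\<bar> + \<bar>v x - v' x\<bar>" by simp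
      have "\<bar>W x y * sin (v y - v x) - W x y * sin (v' y - v' x)\<bar>
          = \<bar>W x y\<bar> * \<bar>sin (v y - v x) - sin (v' y - v' x)\<bar>"
        by (simp add: abs_mult right_diff_distrib[symmetric])
      also have "\<dots> \<le> 1 * \<bar>(v y - v x) - (v' y - v' x)\<bar>"
        by (intro mult_mono kern_bound[OF K x y] abs_sin_diff_le) auto
      also have "\<dots> \<le> \<bar>v y - v' y\<bar> + \<bar>v x - v' x\<bar>" by simp
      finally show "\<bar>W x y * sin (v y - v x) - W x y * sin (v' y - v' x)\<bar> \<le> \<bar>v y - v' y\<bar> + \<bar>v x - v' x\<bar>" .
    qed
    also have "\<dots> = N + \<bar>v x - v' x\<bar>"
      unfolding N_def L1_norm_def
      using Bochner_Integration.integral_add[OF idf integrable_const[of "\<bar>v x - v' x\<bar>"]] by (simp add: prob_space)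
    finally show ?thesis .
  qed
  have "L1_norm M (\<lambda>x. kuramoto_rhs M W v x - kuramoto_rhs M W v' x) \<le> (LINT x|M. N + \<bar>v x - v' x\<bar>)"
    by (rule L1_mono[OF Bochner_Integration.integrable_add[OF integrable_const idf]]) (rule pt)
  also have "\<dots> = N + N"
    unfolding N_def L1_norm_def
    using Bochner_Integration.integral_add[OF integrable_const idf] by (simp add: prob_space)
  finally show ?thesis unfolding N_def by simp
qed

lemma snd_meas:
  fixes g :: "'a \<Rightarrow> real"
  assumes "g \<in> borel_measurable M"
  shows "(\<lambda>(x,y). g y) \<in> borel_measurable (M \<Otimes>\<^sub>M M)"
proof -
  have "(\<lambda>p. g (snd p)) \<in> borel_measurable (M \<Otimes>\<^sub>M M)"
    by (rule measurable_compose[OF measurable_snd assms])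
  thus ?thesis by (simp add: case_prod_beta')
qed

lemma rhs_cut:
  assumes G1: "graphon M W1" and G2: "graphon M W2" and v: "v \<in> borel_measurable M"
  shows "L1_norm M (\<lambda>x. kuramoto_rhs M W1 v x - kuramoto_rhs M W2 v x)
           \<le> 2 * inf_to_one_norm M (\<lambda>x y. W1 x y - W2 x y)"
proof -
  define K where "K = (\<lambda>x y. W1 x y - W2 x y)"
  have K: "kern M K" unfolding K_def by (rule kern_diff[OF G1 G2])
  have K1: "kern M W1" and K2: "kern M W2" using G1 G2 by (auto intro: kern_graphon)
  interpret prob_space M using kern_prob[OF K] .
  have sm: "(\<lambda>y. sin (v y)) \<in> borel_measurable M" and cm: "(\<lambda>y. cos (v y)) \<in> borel_measurable M"
    using v by measurable
  define A where "A x = (LINT y|M. K x y * sin (v y))" for x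
  define B where "B x = (LINT y|M. K x y * cos (v y))" for x
  have Am: "A \<in> borel_measurable M" unfolding A_def[abs_def]
    by (rule kern_int_meas[OF K snd_meas[OF sm]])
  have Bm: "B \<in> borel_measurable M" unfolding B_def[abs_def]
    by (rule kern_int_meas[OF K snd_meas[OF cm]])
  have Ab: "\<bar>A x\<bar> \<le> 1" if "x \<in> space M" for x
    unfolding A_def by (rule kern_int_sec(2)[OF K that sm]) simp
  have Bb: "\<bar>B x\<bar> \<le> 1" if "x \<in> space M" for x
    unfolding B_def by (rule kern_int_sec(2)[OF K that cm]) simp
  have Ai: "integrable M A" by (rule integrable_const_bound[where B=1]) (use Ab Am in auto)
  have Bi: "integrable M B" by (rule integrable_const_bound[where B=1]) (use Bb Bm in auto)
  have pt: "\<bar>kuramoto_rhs M W1 v x - kuramoto_rhs M W2 v x\<bar> \<le> \<bar>A x\<bar> + \<bar>B x\<bar>" if x: "x \<in> space M" for x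
  proof -
    have "kuramoto_rhs M W1 v x - kuramoto_rhs M W2 v x =
        (LINT y|M. W1 x y * sin (v y - v x) - W2 x y * sin (v y - v x))"
      unfolding kuramoto_rhs_def
      by (rule Bochner_Integration.integral_diff[symmetric, OF rhs_sec(1)[OF K1 v x] rhs_sec(1)[OF K2 v x]])
    also have "\<dots> = (LINT y|M. cos (v x) * (K x y * sin (v y)) - sin (v x) * (K x y * cos (v y)))"
      by (rule Bochner_Integration.integral_cong) (auto simp: K_def sin_diff algebra_simps)
    also have "\<dots> = cos (v x) * A x - sin (v x) * B x"
    proof -
      have i1: "integrable M (\<lambda>y. K x y * sin (v y))" by (rule kern_int_sec(1)[OF K x sm]) simp
      have i2: "integrable M (\<lambda>y. K x y * cos (v y))" by (rule kern_int_sec(1)[OF K x cm]) simp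
      show ?thesis unfolding A_def B_def
        using Bochner_Integration.integral_diff[OF integrable_mult_right[OF i1, of "cos (v x)"] integrable_mult_right[OF i2, of "sin (v x)"]]
        by simp
    qed
    also have "\<bar>\<dots>\<bar> \<le> \<bar>cos (v x)\<bar> * \<bar>A x\<bar> + \<bar>sin (v x)\<bar> * \<bar>B x\<bar>"
      by (metis abs_mult abs_triangle_ineq4)
    also have "\<dots> \<le> 1 * \<bar>A x\<bar> + 1 * \<bar>B x\<bar>"
      by (intro add_mono mult_right_mono) auto
    finally show ?thesis by simp
  qed
  define H where "H = {h. h \<in> borel_measurable M \<and> (\<forall>x\<in>space M. \<bar>h x\<bar> \<le> (1::real))}"
  define F where "F h = (LINT x|M. \<bar>LINT y|M. K x y * h y\<bar>)" for h
  have bdd: "bdd_above (F ` H)"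
  proof (rule bdd_aboveI2)
    fix h assume "h \<in> H"
    hence hm: "h \<in> borel_measurable M" and hb: "\<And>y. y \<in> space M \<Longrightarrow> \<bar>h y\<bar> \<le> 1" unfolding H_def by auto
    have "F h \<le> (LINT x|M. 1)" unfolding F_def
      by (rule integral_mono') (use kern_int_sec(2)[OF K _ hm hb] in auto)
    thus "F h \<le> 1" by (simp add: prob_space)
  qed
  have eps: "inf_to_one_norm M (\<lambda>x y. W1 x y - W2 x y) = (SUP h\<in>H. F h)"
    unfolding inf_to_one_norm_def H_def F_def K_def by simp
  have "(\<lambda>y. sin (v y)) \<in> H" unfolding H_def using sm by auto
  hence LA: "L1_norm M A \<le> inf_to_one_norm M (\<lambda>x y. W1 x y - W2 x y)"
    unfolding eps L1_norm_def A_def using cSUP_upper[OF _ bdd, of "\<lambda>y. sin (v y)"] unfolding F_def by (simp add: comp_def)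
  have "(\<lambda>y. cos (v y)) \<in> H" unfolding H_def using cm by auto
  hence LB: "L1_norm M B \<le> inf_to_one_norm M (\<lambda>x y. W1 x y - W2 x y)"
    unfolding eps L1_norm_def B_def using cSUP_upper[OF _ bdd, of "\<lambda>y. cos (v y)"] unfolding F_def by (simp add: comp_def)
  have "L1_norm M (\<lambda>x. kuramoto_rhs M W1 v x - kuramoto_rhs M W2 v x) \<le> L1_norm M A + L1_norm M B"
    by (rule L1_mono_sum[OF Ai Bi pt])
  thus ?thesis using LA LB by simp
qed

lemma rhs_comp:
  assumes G: "graphon M W" and A: "graphon_automorphism M W \<phi>" and v: "v \<in> borel_measurable M"
    and x: "x \<in> space M"
  shows "kuramoto_rhs M W (\<lambda>y. v (\<phi> y)) x = kuramoto_rhs M W v (\<phi> x)"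
proof -
  have K: "kern M W" by (rule kern_graphon[OF G])
  have \<phi>m: "\<phi> \<in> M \<rightarrow>\<^sub>M M" and d: "distr M M \<phi> = M" and ae: "AE y in M. W (\<phi> x) (\<phi> y) = W x y"
    using A x unfolding graphon_automorphism_def meas_pres_def by auto
  have \<phi>x: "\<phi> x \<in> space M" by (rule measurable_space[OF \<phi>m x])
  have g1: "(\<lambda>y. sin (v (\<phi> y) - v (\<phi> x))) \<in> borel_measurable M" using v \<phi>m by measurable
  have g2: "(\<lambda>z. sin (v z - v (\<phi> x))) \<in> borel_measurable M" using v by measurable
  have s1: "(\<lambda>y. W x y) \<in> borel_measurable M" by (rule kern_sec[OF K x])
  have s2: "(\<lambda>z. W (\<phi> x) z) \<in> borel_measurable M" by (rule kern_sec[OF K \<phi>x])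
  have s3: "(\<lambda>y. W (\<phi> x) (\<phi> y)) \<in> borel_measurable M" by (rule measurable_compose[OF \<phi>m s2])
  have f2: "(\<lambda>z. W (\<phi> x) z * sin (v z - v (\<phi> x))) \<in> borel_measurable M"
    by (rule borel_measurable_times[OF s2 g2])
  have "kuramoto_rhs M W (\<lambda>y. v (\<phi> y)) x = (LINT y|M. W (\<phi> x) (\<phi> y) * sin (v (\<phi> y) - v (\<phi> x)))"
    unfolding kuramoto_rhs_def
  proof (rule integral_cong_AE)
    show "(\<lambda>y. W x y * sin (v (\<phi> y) - v (\<phi> x))) \<in> borel_measurable M"
      by (rule borel_measurable_times[OF s1 g1])
    show "(\<lambda>y. W (\<phi> x) (\<phi> y) * sin (v (\<phi> y) - v (\<phi> x))) \<in> borel_measurable M"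
      by (rule borel_measurable_times[OF s3 g1])
    show "AE y in M. W x y * sin (v (\<phi> y) - v (\<phi> x)) = W (\<phi> x) (\<phi> y) * sin (v (\<phi> y) - v (\<phi> x))"
      using ae by eventually_elim simp
  qed
  also have "\<dots> = integral\<^sup>L (distr M M \<phi>) (\<lambda>z. W (\<phi> x) z * sin (v z - v (\<phi> x)))"
    by (rule integral_distr[symmetric, OF \<phi>m f2])
  also have "\<dots> = kuramoto_rhs M W v (\<phi> x)" unfolding d kuramoto_rhs_def ..
  finally show ?thesis .
qed

lemma gronwall_L1:
  assumes ip: "\<And>t. integrable M (p t)" and iD: "\<And>t. integrable M (D t)"
    and d: "L1_deriv M p D"
    and bound: "\<And>t. L1_norm M (D t) \<le> 2 * L1_norm M (p t) + c" and c: "c \<ge> 0"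
  shows "L1_norm M (p t) \<le> (L1_norm M (p 0) + c * \<bar>t\<bar>) * exp (2 * \<bar>t\<bar>)"
proof (rule gronwall[where f="\<lambda>t. L1_norm M (p t)" and L=2 and c=c])
  show "continuous_on UNIV (\<lambda>t. L1_norm M (p t))" by (rule L1_deriv_dini(1)[OF ip iD d])
  show "0 \<le> L1_norm M (p 0)" by (rule L1_nonneg)
  show "(0::real) \<le> 2" by simp
  show "0 \<le> c" by fact
  fix s e :: real assume e: "e > 0"
  obtain dd where "dd > 0" and dd: "\<forall>h. h \<noteq> 0 \<and> \<bar>h\<bar> < dd \<longrightarrow>
            L1_norm M (p (s+h)) \<le> L1_norm M (p s) + \<bar>h\<bar> * (L1_norm M (D s) + e)"
    using L1_deriv_dini(2)[OF ip iD d e] by blast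
  show "\<exists>d>0. \<forall>h. h \<noteq> 0 \<and> \<bar>h\<bar> < d \<longrightarrow> L1_norm M (p (s + h)) \<le> L1_norm M (p s) + \<bar>h\<bar> * (2 * L1_norm M (p s) + c + e)"
  proof (intro exI[of _ dd] conjI allI impI)
    fix h :: real assume h: "h \<noteq> 0 \<and> \<bar>h\<bar> < dd"
    have "\<bar>h\<bar> * (L1_norm M (D s) + e) \<le> \<bar>h\<bar> * (2 * L1_norm M (p s) + c + e)"
      using bound[of s] by (intro mult_left_mono) auto
    thus "L1_norm M (p (s + h)) \<le> L1_norm M (p s) + \<bar>h\<bar> * (2 * L1_norm M (p s) + c + e)"
    proof -
      have "L1_norm M (p (s+h)) \<le> L1_norm M (p s) + \<bar>h\<bar> * (L1_norm M (D s) + e)" using dd h by blast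
      thus ?thesis using \<open>\<bar>h\<bar> * (L1_norm M (D s) + e) \<le> \<bar>h\<bar> * (2 * L1_norm M (p s) + c + e)\<close> by linarith
    qed
  qed (rule \<open>dd > 0\<close>)
qed

lemma L1_tri:
  fixes f g k :: "'a \<Rightarrow> real"
  assumes "integrable M f" "integrable M g" "integrable M k"
  shows "L1_norm M (\<lambda>x. f x - g x) \<le> L1_norm M (\<lambda>x. f x - k x) + L1_norm M (\<lambda>x. k x - g x)"
proof (rule L1_mono_sum)
  show "integrable M (\<lambda>x. f x - k x)" by (rule Bochner_Integration.integrable_diff[OF assms(1,3)])
  show "integrable M (\<lambda>x. k x - g x)" by (rule Bochner_Integration.integrable_diff[OF assms(3,2)])
  fix x show "\<bar>f x - g x\<bar> \<le> \<bar>f x - k x\<bar> + \<bar>k x - g x\<bar>" by arith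
qed

lemma L1_swap: "L1_norm M (\<lambda>x. f x - g x) = L1_norm M (\<lambda>x. g x - f x)"
  unfolding L1_norm_def by (simp add: abs_minus_commute)

theorem corollary6p3:
  fixes M :: "'a measure" and W :: "'a \<Rightarrow> 'a \<Rightarrow> real" and \<phi> :: "'a \<Rightarrow> 'a"
    and u :: "real \<Rightarrow> 'a \<Rightarrow> real"
    and Wn :: "nat \<Rightarrow> 'a \<Rightarrow> 'a \<Rightarrow> real" and un :: "nat \<Rightarrow> real \<Rightarrow> 'a \<Rightarrow> real"
  assumes "graphon M W"
    and "graphon_automorphism M W \<phi>"
    and "kuramoto_trajectory M W u"
    and "AE x in M. u 0 (\<phi> x) = u 0 x"
    and "\<And>n. graphon M (Wn n)"
    and "\<And>n. kuramoto_trajectory M (Wn n) (un n)"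
    and "(\<lambda>n. inf_to_one_norm M (\<lambda>x y. Wn n x y - W x y)) \<longlonglongrightarrow> 0"
    and "(\<lambda>n. L1_norm M (\<lambda>x. un n 0 x - u 0 x)) \<longlonglongrightarrow> 0"
  shows "(\<forall>t. (\<lambda>n. L1_norm M (\<lambda>x. un n t (\<phi> x) - un n t x)) \<longlonglongrightarrow> 0) \<and>
         (\<forall>T. uniform_limit {-T..T} (\<lambda>n t. L1_norm M (\<lambda>x. un n t (\<phi> x) - un n t x))
                 (\<lambda>t. 0) sequentially)"
proof -
  note G = assms(1) and Aut = assms(2) and Gn = assms(5)
  have K: "kern M W" by (rule kern_graphon[OF G])
  have Kn: "\<And>n. kern M (Wn n)" by (rule kern_graphon[OF Gn])
  interpret prob_space M using kern_prob[OF K] .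
  have mp: "meas_pres M \<phi>" using Aut unfolding graphon_automorphism_def by auto
  have iu: "\<And>t. integrable M (u t)" and du: "L1_deriv M u (\<lambda>t. kuramoto_rhs M W (u t))"
    using assms(3) unfolding kuramoto_trajectory_def L1_deriv_def by auto
  have iun: "\<And>n t. integrable M (un n t)" and dun: "\<And>n. L1_deriv M (un n) (\<lambda>t. kuramoto_rhs M (Wn n) (un n t))"
    using assms(6) unfolding kuramoto_trajectory_def L1_deriv_def by auto
  have mu: "\<And>t. u t \<in> borel_measurable M" using iu by auto
  have mun: "\<And>n t. un n t \<in> borel_measurable M" using iun by auto
  have ir: "\<And>t. integrable M (kuramoto_rhs M W (u t))" by (rule rhs_integrable[OF K mu])
  have irn: "\<And>n t. integrable M (kuramoto_rhs M (Wn n) (un n t))" by (rule rhs_integrable[OF Kn mun])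
  have iuc: "\<And>t. integrable M (\<lambda>x. u t (\<phi> x))" by (rule integrable_comp[OF mp iu])
  have irc: "\<And>t. integrable M (\<lambda>x. kuramoto_rhs M W (u t) (\<phi> x))" by (rule integrable_comp[OF mp ir])

  have inv: "L1_norm M (\<lambda>x. u t (\<phi> x) - u t x) = 0" for t
  proof -
    let ?p = "\<lambda>t x. u t (\<phi> x) - u t x"
    let ?D = "\<lambda>t x. kuramoto_rhs M W (u t) (\<phi> x) - kuramoto_rhs M W (u t) x"
    have dc: "L1_deriv M (\<lambda>t x. u t (\<phi> x)) (\<lambda>t x. kuramoto_rhs M W (u t) (\<phi> x))"
      by (rule L1_deriv_comp[OF mp iu ir du])
    have d: "L1_deriv M ?p ?D" by (rule L1_deriv_diff[OF iuc iu irc ir dc du])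
    have bound: "L1_norm M (?D s) \<le> 2 * L1_norm M (?p s) + 0" for s
    proof -
      have "L1_norm M (?D s) = L1_norm M (\<lambda>x. kuramoto_rhs M W (\<lambda>y. u s (\<phi> y)) x - kuramoto_rhs M W (u s) x)"
        by (rule L1_eq) (simp add: rhs_comp[OF G Aut mu])
      also have "\<dots> \<le> 2 * L1_norm M (?p s)" by (rule rhs_lip[OF K iuc iu])
      finally show ?thesis by simp
    qed
    have p0: "L1_norm M (?p 0) = 0"
      unfolding L1_norm_def using assms(4) by (intro integral_eq_zero_AE) auto
    have "L1_norm M (?p t) \<le> (L1_norm M (?p 0) + 0 * \<bar>t\<bar>) * exp (2 * \<bar>t\<bar>)"
      by (rule gronwall_L1[OF Bochner_Integration.integrable_diff[OF iuc iu] Bochner_Integration.integrable_diff[OF irc ir] d bound]) simp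
    thus ?thesis using p0 L1_nonneg[of M "?p t"] by simp
  qed

  define eps where "eps n = inf_to_one_norm M (\<lambda>x y. Wn n x y - W x y)" for n
  define f0 where "f0 n = L1_norm M (\<lambda>x. un n 0 x - u 0 x)" for n
  have cut: "L1_norm M (\<lambda>x. kuramoto_rhs M (Wn n) v x - kuramoto_rhs M W v x) \<le> 2 * eps n"
    if "v \<in> borel_measurable M" for n v
    unfolding eps_def by (rule rhs_cut[OF Gn G that])
  have eps0: "eps n \<ge> 0" for n using order_trans[OF L1_nonneg cut[OF mu[of 0], of n]] by simp
  have cmp: "L1_norm M (\<lambda>x. un n t x - u t x) \<le> (f0 n + 2 * eps n * \<bar>t\<bar>) * exp (2 * \<bar>t\<bar>)" for n t
  proof -
    let ?p = "\<lambda>t x. un n t x - u t x"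
    let ?D = "\<lambda>t x. kuramoto_rhs M (Wn n) (un n t) x - kuramoto_rhs M W (u t) x"
    have d: "L1_deriv M ?p ?D" by (rule L1_deriv_diff[OF iun iu irn ir dun du])
    have bound: "L1_norm M (?D s) \<le> 2 * L1_norm M (?p s) + 2 * eps n" for s
    proof -
      have irnu: "integrable M (kuramoto_rhs M (Wn n) (u s))" by (rule rhs_integrable[OF Kn mu])
      have "L1_norm M (?D s) \<le> L1_norm M (\<lambda>x. kuramoto_rhs M (Wn n) (un n s) x - kuramoto_rhs M (Wn n) (u s) x)
            + L1_norm M (\<lambda>x. kuramoto_rhs M (Wn n) (u s) x - kuramoto_rhs M W (u s) x)"
        by (rule L1_tri[OF irn ir irnu])
      also have "\<dots> \<le> 2 * L1_norm M (?p s) + 2 * eps n"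
        by (intro add_mono rhs_lip[OF Kn iun iu] cut mu)
      finally show ?thesis .
    qed
    show ?thesis unfolding f0_def
      by (rule gronwall_L1[OF Bochner_Integration.integrable_diff[OF iun iu] Bochner_Integration.integrable_diff[OF irn ir] d bound]) (simp add: eps0)
  qed

  have g_le: "L1_norm M (\<lambda>x. un n t (\<phi> x) - un n t x) \<le> 2 * L1_norm M (\<lambda>x. un n t x - u t x)" for n t
  proof -
    have iunc: "integrable M (\<lambda>x. un n t (\<phi> x))" by (rule integrable_comp[OF mp iun])
    have "L1_norm M (\<lambda>x. un n t (\<phi> x) - un n t x) \<le>
          L1_norm M (\<lambda>x. un n t (\<phi> x) - u t (\<phi> x)) + L1_norm M (\<lambda>x. u t (\<phi> x) - un n t x)"
      by (rule L1_tri[OF iunc iun iuc])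
    also have "L1_norm M (\<lambda>x. un n t (\<phi> x) - u t (\<phi> x)) = L1_norm M (\<lambda>x. un n t x - u t x)"
      by (rule L1_comp[OF mp, of "\<lambda>x. un n t x - u t x"]) (rule borel_measurable_diff[OF mun mu])
    also have "L1_norm M (\<lambda>x. u t (\<phi> x) - un n t x) \<le>
          L1_norm M (\<lambda>x. u t (\<phi> x) - u t x) + L1_norm M (\<lambda>x. un n t x - u t x)"
      using L1_tri[OF iuc[of t] iun[of n t] iu[of t]] L1_swap[of M "\<lambda>x. u t x" "\<lambda>x. un n t x"] by simp
    finally show ?thesis using inv[of t] by simp
  qed

  have unif: "uniform_limit {-T..T} (\<lambda>n t. L1_norm M (\<lambda>x. un n t (\<phi> x) - un n t x)) (\<lambda>t. 0) sequentially" for T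
  proof -
    define B where "B n = 2 * ((f0 n + 2 * eps n * \<bar>T\<bar>) * exp (2 * \<bar>T\<bar>))" for n
    have "B \<longlonglongrightarrow> 2 * ((0 + 2 * 0 * \<bar>T\<bar>) * exp (2 * \<bar>T\<bar>))"
      unfolding B_def using assms(7,8) unfolding eps_def[abs_def] f0_def[abs_def]
      by (intro tendsto_intros)
    hence B0: "B \<longlonglongrightarrow> 0" by simp
    have le: "L1_norm M (\<lambda>x. un n t (\<phi> x) - un n t x) \<le> B n" if "t \<in> {-T..T}" for n t
    proof -
      have tT: "\<bar>t\<bar> \<le> \<bar>T\<bar>" using that by auto
      have f0n: "f0 n \<ge> 0" unfolding f0_def by (rule L1_nonneg)
      have "(f0 n + 2 * eps n * \<bar>t\<bar>) * exp (2 * \<bar>t\<bar>) \<le> (f0 n + 2 * eps n * \<bar>T\<bar>) * exp (2 * \<bar>T\<bar>)"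
        using tT eps0[of n] f0n by (intro mult_mono add_mono mult_left_mono) auto
      thus ?thesis using g_le[of n t] cmp[of n t] unfolding B_def by linarith
    qed
    show ?thesis unfolding uniform_limit_iff
    proof (intro allI impI)
      fix e :: real assume "e > 0"
      hence "eventually (\<lambda>n. B n < e) sequentially" using B0 by (auto dest: order_tendstoD(2))
      thus "\<forall>\<^sub>F n in sequentially. \<forall>t\<in>{-T..T}. dist (L1_norm M (\<lambda>x. un n t (\<phi> x) - un n t x)) 0 < e"
      proof eventually_elim
        case (elim n)
        show ?case
        proof (intro ballI)
          fix t assume "t \<in> {-T..T}"
          hence "L1_norm M (\<lambda>x. un n t (\<phi> x) - un n t x) \<le> B n" by (rule le)
          moreover have "L1_norm M (\<lambda>x. un n t (\<phi> x) - un n t x) \<ge> 0" by (rule L1_nonneg)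
          ultimately show "dist (L1_norm M (\<lambda>x. un n t (\<phi> x) - un n t x)) 0 < e"
            using elim by (simp add: dist_real_def)
        qed
      qed
    qed
  qed
  have "(\<lambda>n. L1_norm M (\<lambda>x. un n t (\<phi> x) - un n t x)) \<longlonglongrightarrow> 0" for t
    by (rule tendsto_uniform_limitI[OF unif[of "\<bar>t\<bar>"]]) auto
  thus ?thesis using unif by blast
qed

end
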